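(* Let $X,Y$ be Banach spaces over $\mathbb{K}\in\{\mathbb{R},\mathbb{C}\}$ and let $G\in L(X,Y)$ with $\|G\|=1$. Then for every $T\in L(X,Y)$, \[ \|T\|_G=\max\{|\lambda|:\lambda\in S_G(T)\}=\max\{\lambda:\lambda\in \widetilde{S}_G(T)\}, \] where \[ S_G(T):=\bigcap_{\delta>0}\overline{\{y^*(Tx): x\in S_X,\ y^*\in S_{Y^*},\ \|Gx\|>1-\delta\}},\qquad \widetilde{S}_G(T):=\bigcap_{\delta>0}\overline{\{\|Tx\|: x\in S_X,\ \|Gx\|>1-\delta\}}. \]
   Context: $S_X$ denotes the unit sphere of $X$, $Y^*$ the dual of $Y$, and $L(X,Y)$ the space of bounded linear operators with the operator norm. For $G\in L(X,Y)$ with $\|G\|=1$ and $T\in L(X,Y)$, the $G$-(semi)norm is $\|T\|_G := \inf_{\delta>0}\sup\{\|Tx\|: x\in S_X,\ \|Gx\|>1-\delta\}$. *)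

theory Defs
  imports "HOL-Analysis.Analysis"
begin

text \<open>Complex Banach spaces: a real Banach space together with a compatible
  complex scalar multiplication (the library only has real normed spaces).\<close>
class complex_banach = banach +
  fixes cscale :: "complex \<Rightarrow> 'a \<Rightarrow> 'a"  (infixr "*\<^sub>C" 75)
  assumes cscale_add_right: "c *\<^sub>C (x + y) = c *\<^sub>C x + c *\<^sub>C y"
    and cscale_add_left: "(a + b) *\<^sub>C x = a *\<^sub>C x + b *\<^sub>C x"
    and cscale_cscale: "a *\<^sub>C (b *\<^sub>C x) = (a * b) *\<^sub>C x"
    and cscale_one: "1 *\<^sub>C x = x"
    and cscale_of_real: "complex_of_real r *\<^sub>C x = r *\<^sub>R x"
    and norm_cscale: "norm (c *\<^sub>C x) = cmod c * norm x"

definition clinear_op :: "('a::complex_banach \<Rightarrow> 'b::complex_banach) \<Rightarrow> bool" where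
  "clinear_op T \<longleftrightarrow> (\<forall>c x. T (c *\<^sub>C x) = c *\<^sub>C T x)"

definition cdual :: "('b::complex_banach \<Rightarrow> complex) \<Rightarrow> bool" where
  "cdual f \<longleftrightarrow> bounded_linear f \<and> (\<forall>c y. f (c *\<^sub>C y) = c * f y)"

definition gnorm :: "('a::real_normed_vector \<Rightarrow> 'b::real_normed_vector) \<Rightarrow> ('a \<Rightarrow> 'b) \<Rightarrow> real" where
  "gnorm G T = (INF \<delta>\<in>{0<..}. SUP x\<in>{x \<in> sphere 0 1. norm (G x) > 1 - \<delta>}. norm (T x))"

definition SG_real :: "('a::real_normed_vector \<Rightarrow> 'b::real_normed_vector) \<Rightarrow> ('a \<Rightarrow> 'b) \<Rightarrow> real set" where
  "SG_real G T = (\<Inter>\<delta>\<in>{0<..}. closure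
     {blinfun_apply f (T x) | x f. x \<in> sphere 0 1 \<and> (f :: 'b \<Rightarrow>\<^sub>L real) \<in> sphere 0 1
        \<and> norm (G x) > 1 - \<delta>})"

definition SG_complex :: "('a::complex_banach \<Rightarrow> 'b::complex_banach) \<Rightarrow> ('a \<Rightarrow> 'b) \<Rightarrow> complex set" where
  "SG_complex G T = (\<Inter>\<delta>\<in>{0<..}. closure
     {f (T x) | x f. x \<in> sphere 0 1 \<and> cdual f \<and> onorm f = 1 \<and> norm (G x) > 1 - \<delta>})"

definition SG_tilde :: "('a::real_normed_vector \<Rightarrow> 'b::real_normed_vector) \<Rightarrow> ('a \<Rightarrow> 'b) \<Rightarrow> real set" where
  "SG_tilde G T = (\<Inter>\<delta>\<in>{0<..}. closure
     {norm (T x) | x. x \<in> sphere 0 1 \<and> norm (G x) > 1 - \<delta>})"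

definition is_max :: "real set \<Rightarrow> real \<Rightarrow> bool" where
  "is_max A m \<longleftrightarrow> m \<in> A \<and> (\<forall>a\<in>A. a \<le> m)"

end

theory Submission
  imports Defs "HOL-Analysis.Analysis"
begin


definition domgraphs :: "'a::real_normed_vector \<Rightarrow> ('a \<times> real) set set" where
  "domgraphs y = {H. subspace H \<and> (\<forall>t. (t *\<^sub>R y, t * norm y) \<in> H) \<and> (\<forall>p\<in>H. snd p \<le> norm (fst p))}"

lemma domgraph_fun:
  assumes "H \<in> domgraphs y" "(v,a) \<in> H" "(v,b) \<in> H" shows "a = b"
proof -
  have S: "subspace H" and D: "\<forall>p\<in>H. snd p \<le> norm (fst p)" using assms(1) by (auto simp: domgraphs_def)
  have "(v,a) - (v,b) \<in> H" by (rule subspace_diff[OF S assms(2,3)])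
  hence h1: "(0, a-b) \<in> H" by simp
  have "(v,b) - (v,a) \<in> H" by (rule subspace_diff[OF S assms(3,2)])
  hence h2: "(0, b-a) \<in> H" by simp
  have "a - b \<le> norm (0::'a)" using D h1 by fastforce
  moreover have "b - a \<le> norm (0::'a)" using D h2 by fastforce
  ultimately show ?thesis by simp
qed

lemma domgraph_chain:
  assumes "C \<noteq> {}" "subset.chain (domgraphs y) C"
  shows "\<Union>C \<in> domgraphs y"
proof -
  have C: "C \<subseteq> domgraphs y" and ch: "\<forall>X\<in>C. \<forall>Y\<in>C. X \<subseteq> Y \<or> Y \<subseteq> X"
    using assms(2) by (auto simp: subset.chain_def)
  obtain X0 where X0: "X0 \<in> C" using assms(1) by blast
  have CS: "subspace X" if "X \<in> C" for X using C that unfolding domgraphs_def by blast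
  have CD: "\<forall>p\<in>X. snd p \<le> norm (fst p)" if "X \<in> C" for X using C that unfolding domgraphs_def by blast
  have CY: "\<forall>t. (t *\<^sub>R y, t * norm y) \<in> X" if "X \<in> C" for X using C that unfolding domgraphs_def by blast
  have "subspace (\<Union>C)"
  proof (rule subspaceI)
    show "0 \<in> \<Union>C" using X0 subspace_0[OF CS[OF X0]] by blast
  next
    fix p q assume "p \<in> \<Union>C" "q \<in> \<Union>C"
    then obtain X Y where XY: "X\<in>C" "Y\<in>C" "p\<in>X" "q\<in>Y" by blast
    show "p + q \<in> \<Union>C"
    proof (cases "X \<subseteq> Y")
      case True
      then have "p + q \<in> Y" using XY subspace_add[OF CS[OF XY(2)]] by blast
      then show ?thesis using XY by blast
    next
      case False
      hence "Y \<subseteq> X" using ch XY by blast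
      then have "p + q \<in> X" using XY subspace_add[OF CS[OF XY(1)]] by blast
      then show ?thesis using XY by blast
    qed
  next
    fix c p assume "p \<in> \<Union>C"
    then obtain X where X: "X\<in>C" "p\<in>X" by blast
    then have "c *\<^sub>R p \<in> X" using subspace_scale[OF CS[OF X(1)]] by blast
    then show "c *\<^sub>R p \<in> \<Union>C" using X by blast
  qed
  moreover have "\<forall>t. (t *\<^sub>R y, t * norm y) \<in> \<Union>C" using X0 CY by blast
  moreover have "\<forall>p\<in>\<Union>C. snd p \<le> norm (fst p)" using CD by blast
  ultimately show ?thesis unfolding domgraphs_def by blast
qed

lemma domgraph_extend:
  assumes H: "H \<in> domgraphs y" and z: "\<forall>a. (z,a) \<notin> H"
  shows "\<exists>H'\<in>domgraphs y. H \<subseteq> H' \<and> H' \<noteq> H"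
proof -
  have S: "subspace H" and D: "\<And>v a. (v,a)\<in>H \<Longrightarrow> a \<le> norm v" using H by (auto simp: domgraphs_def)
  have key: "a - norm (u - z) \<le> norm (w + z) - b" if "(u,a)\<in>H" "(w,b)\<in>H" for u a w b
  proof -
    have "(u,a) + (w,b) \<in> H" using subspace_add[OF S that] .
    hence "a + b \<le> norm (u + w)" using D by simp
    also have "norm (u + w) \<le> norm (u - z) + norm (w + z)"
      using norm_triangle_ineq[of "u - z" "w + z"] by simp
    finally show ?thesis by simp
  qed
  define L where "L = {a - norm (u - z) | u a. (u,a) \<in> H}"
  define c where "c = Sup L"
  have H0: "(0,0) \<in> H" using subspace_0[OF S] by (simp add: zero_prod_def)
  have Lne: "L \<noteq> {}" using H0 unfolding L_def by blast
  have Lbdd: "bdd_above L" unfolding L_def bdd_above_def using key[OF _ H0] by auto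
  have c1: "a - norm (u - z) \<le> c" if "(u,a)\<in>H" for u a
    unfolding c_def by (rule cSup_upper[OF _ Lbdd]) (use that L_def in blast)
  have c2: "c \<le> norm (w + z) - b" if "(w,b)\<in>H" for w b
    unfolding c_def by (rule cSup_least[OF Lne]) (use key that L_def in blast)
  define H' where "H' = {p + t *\<^sub>R (z,c) | p t. p \<in> H}"
  have dom': "snd q \<le> norm (fst q)" if "q \<in> H'" for q
  proof -
    obtain v a t where q: "q = (v + t *\<^sub>R z, a + t * c)" and va: "(v,a)\<in>H"
      using \<open>q \<in> H'\<close> unfolding H'_def by force
    consider "t = 0" | "t > 0" | "t < 0" by linarith
    then show ?thesis
    proof cases
      case 1 then show ?thesis using q D va by simp
    next
      case 2
      have "(inverse t *\<^sub>R (v,a)) \<in> H" using subspace_scale[OF S va] .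
      hence "c \<le> norm (inverse t *\<^sub>R v + z) - inverse t * a" using c2 by simp
      hence "t * c \<le> t * (norm (inverse t *\<^sub>R v + z) - inverse t * a)"
        using 2 by (simp add: mult_left_mono)
      also have "\<dots> = t * norm (inverse t *\<^sub>R v + z) - a"
        using 2 by (simp add: algebra_simps)
      also have "t * norm (inverse t *\<^sub>R v + z) = norm (t *\<^sub>R (inverse t *\<^sub>R v + z))"
        using 2 by simp
      also have "t *\<^sub>R (inverse t *\<^sub>R v + z) = v + t *\<^sub>R z"
        using 2 by (simp add: algebra_simps)
      finally show ?thesis using q by simp
    next
      case 3
      obtain s where s: "s > 0" "t = - s" using 3 by (intro that[of "-t"]) auto
      have "(inverse s *\<^sub>R (v,a)) \<in> H" using subspace_scale[OF S va] .
      hence A: "inverse s * a - norm (inverse s *\<^sub>R v - z) \<le> c" using c1 by simp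
      have B: "s * (inverse s * a - norm (inverse s *\<^sub>R v - z)) \<le> s * c"
        using mult_left_mono[OF A, of s] s by simp
      have C: "s * (inverse s * a - norm (inverse s *\<^sub>R v - z)) = a - norm (s *\<^sub>R (inverse s *\<^sub>R v - z))"
        using s by (simp add: right_diff_distrib)
      have D: "s *\<^sub>R (inverse s *\<^sub>R v - z) = v + t *\<^sub>R z"
        using s by (simp add: scaleR_diff_right)
      have "a - s * c \<le> norm (v + t *\<^sub>R z)" using B C D by simp
      then show ?thesis using q s by simp
    qed
  qed
  have sub': "subspace H'"
  proof (rule subspaceI)
    show "0 \<in> H'" unfolding H'_def using H0 by (force simp: zero_prod_def)
  next
    fix p q assume "p \<in> H'" "q \<in> H'"
    then obtain p1 t1 q1 t2 where "p = p1 + t1 *\<^sub>R (z,c)" "q = q1 + t2 *\<^sub>R (z,c)" "p1 \<in> H" "q1 \<in> H"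
      unfolding H'_def by blast
    moreover have "p1 + q1 \<in> H" using subspace_add[OF S] calculation by blast
    ultimately show "p + q \<in> H'" unfolding H'_def
      by (intro CollectI exI[of _ "p1 + q1"] exI[of _ "t1 + t2"]) (simp add: algebra_simps scaleR_add_left)
  next
    fix r p assume "p \<in> H'"
    then obtain p1 t1 where "p = p1 + t1 *\<^sub>R (z,c)" "p1 \<in> H" unfolding H'_def by blast
    moreover have "r *\<^sub>R p1 \<in> H" using subspace_scale[OF S] calculation by blast
    ultimately show "r *\<^sub>R p \<in> H'" unfolding H'_def
      by (intro CollectI exI[of _ "r *\<^sub>R p1"] exI[of _ "r * t1"]) (simp add: algebra_simps)
  qed
  have sup: "H \<subseteq> H'" unfolding H'_def by (force)
  have "(z,c) \<in> H'" unfolding H'_def using H0 by (force)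
  hence ne: "H' \<noteq> H" using z by blast
  have "H' \<in> domgraphs y" using sub' dom' sup H unfolding domgraphs_def by blast
  then show ?thesis using sup ne by blast
qed

lemma hahn_banach_norming:
  fixes y :: "'a::real_normed_vector"
  shows "\<exists>f. (\<forall>u v. f (u + v) = f u + f v) \<and> (\<forall>r v. f (r *\<^sub>R v) = r * f v)
             \<and> f y = norm y \<and> (\<forall>v. \<bar>f v\<bar> \<le> norm v)"
proof -
  have ne: "domgraphs y \<noteq> {}"
  proof -
    define H0 where "H0 = {(t *\<^sub>R y, t * norm y) | t. True}"
    have "subspace H0"
    proof (rule subspaceI)
      show "0 \<in> H0" unfolding H0_def by (auto simp: zero_prod_def intro: exI[of _ 0])
    next
      fix p q assume "p \<in> H0" "q \<in> H0"
      then obtain s t where "p = (s *\<^sub>R y, s * norm y)" "q = (t *\<^sub>R y, t * norm y)" unfolding H0_def by blast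
      then show "p + q \<in> H0" unfolding H0_def
        by (intro CollectI exI[of _ "s + t"]) (simp add: algebra_simps scaleR_add_left)
    next
      fix r p assume "p \<in> H0"
      then obtain s where "p = (s *\<^sub>R y, s * norm y)" unfolding H0_def by blast
      then show "r *\<^sub>R p \<in> H0" unfolding H0_def
        by (intro CollectI exI[of _ "r * s"]) simp
    qed
    moreover have "\<forall>t. (t *\<^sub>R y, t * norm y) \<in> H0" unfolding H0_def by blast
    moreover have "\<forall>p\<in>H0. snd p \<le> norm (fst p)" unfolding H0_def by (auto simp: abs_mult intro!: mult_right_mono)
    ultimately have "H0 \<in> domgraphs y" unfolding domgraphs_def by blast
    then show ?thesis by blast
  qed
  obtain M where M: "M \<in> domgraphs y" and max: "\<forall>X\<in>domgraphs y. M \<subseteq> X \<longrightarrow> X = M"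
    using subset_Zorn_nonempty[OF ne domgraph_chain] by blast
  have tot: "\<forall>v. \<exists>a. (v,a) \<in> M"
  proof (rule ccontr)
    assume "\<not> ?thesis"
    then obtain z where "\<forall>a. (z,a) \<notin> M" by blast
    then show False using domgraph_extend[OF M] max by blast
  qed
  define f where "f v = (SOME a. (v,a) \<in> M)" for v
  have fM: "(v, f v) \<in> M" for v unfolding f_def using tot by (metis someI_ex)
  have S: "subspace M" and D: "\<And>v a. (v,a)\<in>M \<Longrightarrow> a \<le> norm v" using M by (auto simp: domgraphs_def)
  have add: "f (u + v) = f u + f v" for u v
  proof -
    have "(u, f u) + (v, f v) \<in> M" using subspace_add[OF S fM fM] .
    then show ?thesis using domgraph_fun[OF M fM] by simp
  qed
  have scl: "f (r *\<^sub>R v) = r * f v" for r v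
  proof -
    have "r *\<^sub>R (v, f v) \<in> M" using subspace_scale[OF S fM] .
    then show ?thesis using domgraph_fun[OF M fM] by simp
  qed
  have fy: "f y = norm y"
  proof -
    have "(1 *\<^sub>R y, 1 * norm y) \<in> M" using M by (simp only: domgraphs_def) blast
    then show ?thesis using domgraph_fun[OF M fM] by simp
  qed
  have bd: "\<bar>f v\<bar> \<le> norm v" for v
  proof -
    have "f v \<le> norm v" using D fM by blast
    moreover have "f (-v) \<le> norm (-v)" using D fM by blast
    moreover have "f (-v) = - f v" using scl[of "-1" v] by simp
    ultimately show ?thesis by simp
  qed
  show ?thesis using add scl fy bd by blast
qed



lemma real_norming:
  fixes y :: "'b::real_normed_vector"
  assumes "\<exists>w::'b. w \<noteq> 0"
  shows "\<exists>f::'b \<Rightarrow>\<^sub>L real. norm f = 1 \<and> blinfun_apply f y = norm y"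
proof -
  obtain y' :: 'b where y': "y' \<noteq> 0" "y \<noteq> 0 \<Longrightarrow> y' = y" using assms by metis
  obtain f where add: "\<And>u v. f (u + v) = f u + f v" and scl: "\<And>r v. f (r *\<^sub>R v) = r * f v"
    and fy: "f y' = norm y'" and bd: "\<And>v. \<bar>f v\<bar> \<le> norm v"
    using hahn_banach_norming[of y'] by blast
  have bl: "bounded_linear f"
    by (rule bounded_linear_intro[where K=1]) (use add scl bd in auto)
  have f0: "f 0 = 0" using scl[of 0 0] by simp
  have "norm (Blinfun f) \<le> 1"
    by (rule norm_blinfun_bound) (use bd bl in \<open>auto simp: bounded_linear_Blinfun_apply\<close>)
  moreover have "norm y' \<le> norm (Blinfun f) * norm y'"
    using norm_blinfun[of "Blinfun f" y'] fy bl by (simp add: bounded_linear_Blinfun_apply)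
  hence "1 \<le> norm (Blinfun f)" using y' by simp
  ultimately have "norm (Blinfun f) = 1" by simp
  moreover have "f y = norm y" using fy y' f0 by (cases "y = 0") auto
  ultimately show ?thesis using bl by (intro exI[of _ "Blinfun f"]) (simp add: bounded_linear_Blinfun_apply)
qed

lemma complex_norming:
  fixes y :: "'d::complex_banach"
  assumes "\<exists>w::'d. w \<noteq> 0"
  shows "\<exists>F. cdual F \<and> onorm F = 1 \<and> F y = complex_of_real (norm y)"
proof -
  obtain y' :: 'd where y': "y' \<noteq> 0" "y \<noteq> 0 \<Longrightarrow> y' = y" using assms by metis
  obtain f where add: "\<And>u v. f (u + v) = f u + f v" and scl: "\<And>r v. f (r *\<^sub>R v) = r * f v"
    and fy: "f y' = norm y'" and bd: "\<And>v. \<bar>f v\<bar> \<le> norm v"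
    using hahn_banach_norming[of y'] by blast
  define F where "F v = Complex (f v) (- f (\<i> *\<^sub>C v))" for v
  have addF: "F (u + v) = F u + F v" for u v
    by (simp add: F_def add cscale_add_right complex_eq_iff)
  have sc: "c *\<^sub>C v = Re c *\<^sub>R v + Im c *\<^sub>R (\<i> *\<^sub>C v)" for c and v :: 'd
  proof -
    have "c = complex_of_real (Re c) + complex_of_real (Im c) * \<i>"
      by (simp add: complex_eq_iff)
    then have "c *\<^sub>C v = (complex_of_real (Re c) + complex_of_real (Im c) * \<i>) *\<^sub>C v"
      by simp
    also have "\<dots> = Re c *\<^sub>R v + Im c *\<^sub>R (\<i> *\<^sub>C v)"
      by (simp add: cscale_add_left cscale_cscale[symmetric] cscale_of_real)
    finally show ?thesis .
  qed
  have fc: "f (c *\<^sub>C v) = Re c * f v + Im c * f (\<i> *\<^sub>C v)" for c and v :: 'd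
    by (subst sc) (simp add: add scl)
  have ii: "\<i> *\<^sub>C (c *\<^sub>C v) = (\<i> * c) *\<^sub>C v" for c and v :: 'd by (simp add: cscale_cscale)
  have Fc: "F (c *\<^sub>C v) = c * F v" for c and v :: 'd
  proof -
    have "F (c *\<^sub>C v) = Complex (f (c *\<^sub>C v)) (- f ((\<i> * c) *\<^sub>C v))" by (simp add: F_def ii)
    also have "\<dots> = Complex (Re c * f v + Im c * f (\<i> *\<^sub>C v)) (Im c * f v - Re c * f (\<i> *\<^sub>C v))"
      using fc[of c v] fc[of "\<i> * c" v] by simp
    also have "\<dots> = c * F v" by (simp add: F_def complex_eq_iff)
    finally show ?thesis .
  qed
  have sclF: "F (r *\<^sub>R v) = r *\<^sub>R F v" for r v
    using Fc[of "complex_of_real r" v] by (simp add: cscale_of_real scaleR_conv_of_real)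
  have bdF: "cmod (F v) \<le> norm v" for v
  proof (cases "F v = 0")
    case True then show ?thesis by simp
  next
    case False
    define c where "c = cnj (F v) / complex_of_real (cmod (F v))"
    have cm: "cmod c = 1" using False by (simp add: c_def norm_divide)
    have "F (c *\<^sub>C v) = c * F v" by (rule Fc)
    also have "\<dots> = complex_of_real (cmod (F v))"
    proof -
      have e: "cnj (F v) * F v = complex_of_real (cmod (F v)) * complex_of_real (cmod (F v))"
        by (metis complex_norm_square mult.commute of_real_mult power2_eq_square)
      have "c * F v = (cnj (F v) * F v) / complex_of_real (cmod (F v))" by (simp add: c_def)
      also have "\<dots> = complex_of_real (cmod (F v))" using False by (simp only: e) simp
      finally show ?thesis .
    qed
    finally have "Re (F (c *\<^sub>C v)) = cmod (F v)" by simp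
    hence "cmod (F v) = f (c *\<^sub>C v)" by (simp add: F_def)
    also have "\<dots> \<le> norm (c *\<^sub>C v)" using bd by (metis abs_le_D1)
    also have "\<dots> = norm v" by (simp add: norm_cscale cm)
    finally show ?thesis .
  qed
  have bl: "bounded_linear F"
    by (rule bounded_linear_intro[where K=1]) (use addF sclF bdF in auto)
  have "onorm F \<le> 1"
  proof -
    have "norm (Blinfun F) \<le> 1"
      by (rule norm_blinfun_bound) (use bdF bl in \<open>auto simp: bounded_linear_Blinfun_apply\<close>)
    then show ?thesis using bl by (simp add: norm_blinfun.rep_eq bounded_linear_Blinfun_apply)
  qed
  have Fy': "F y' = complex_of_real (norm y')"
  proof -
    have "(cmod (F y'))\<^sup>2 = (Re (F y'))\<^sup>2 + (Im (F y'))\<^sup>2" by (rule cmod_power2)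
    moreover have "Re (F y') = norm y'" by (simp add: F_def fy)
    moreover have "(cmod (F y'))\<^sup>2 \<le> (norm y')\<^sup>2" using bdF[of y'] by (simp add: power_mono)
    ultimately have "(Im (F y'))\<^sup>2 \<le> 0" by simp
    hence "Im (F y') = 0" by simp
    then show ?thesis using \<open>Re (F y') = norm y'\<close> by (simp add: complex_eq_iff)
  qed
  have "norm y' \<le> onorm F * norm y'" using onorm[OF bl, of y'] Fy' by simp
  hence "1 \<le> onorm F" using y' by simp
  have F0: "F 0 = 0" using sclF[of 0 0] by simp
  have cd: "cdual F" unfolding cdual_def using bl Fc by blast
  have o1: "onorm F = 1" using \<open>onorm F \<le> 1\<close> \<open>1 \<le> onorm F\<close> by linarith
  have Fy: "F y = complex_of_real (norm y)"
  proof (cases "y = 0")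
    case True then show ?thesis using F0 by simp
  next
    case False then show ?thesis using Fy' y'(2) by simp
  qed
  show ?thesis using cd o1 Fy by blast
qed



lemma gcore:
  fixes P :: "real \<Rightarrow> 'x \<Rightarrow> bool" and h :: "'x \<Rightarrow> real"
  assumes ex: "\<And>\<delta>. \<delta> > 0 \<Longrightarrow> \<exists>x. P \<delta> x"
    and mono: "\<And>\<delta> \<delta>' x. \<delta> \<le> \<delta>' \<Longrightarrow> P \<delta> x \<Longrightarrow> P \<delta>' x"
    and h0: "\<And>x. 0 \<le> h x" and hB: "\<And>\<delta> x. P \<delta> x \<Longrightarrow> h x \<le> B"
  defines "g \<equiv> (INF \<delta>\<in>{0<..}. SUP x\<in>{x. P \<delta> x}. h x)"
  shows gcore_approx: "\<And>\<delta> \<epsilon>. \<delta> > 0 \<Longrightarrow> \<epsilon> > 0 \<Longrightarrow> \<exists>x. P \<delta> x \<and> \<bar>h x - g\<bar> < \<epsilon>"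
    and gcore_upper: "\<And>\<epsilon>. \<epsilon> > 0 \<Longrightarrow> \<exists>\<delta>>0. \<forall>x. P \<delta> x \<longrightarrow> h x < g + \<epsilon>"
proof -
  define s where "s \<delta> = (SUP x\<in>{x. P \<delta> x}. h x)" for \<delta>
  have bdd: "bdd_above (h ` {x. P \<delta> x})" for \<delta> using hB by (auto simp: bdd_above_def)
  have hs: "h x \<le> s \<delta>" if "P \<delta> x" for \<delta> x
    unfolding s_def by (rule cSUP_upper[OF _ bdd]) (use that in simp)
  have s0: "0 \<le> s \<delta>" if "\<delta> > 0" for \<delta>
    using ex[OF that] hs h0 by (meson order_trans)
  have smono: "s \<delta> \<le> s \<delta>'" if "0 < \<delta>" "\<delta> \<le> \<delta>'" for \<delta> \<delta>'
    unfolding s_def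
    by (rule cSUP_subset_mono) (use ex[OF that(1)] bdd mono that in auto)
  have gdef: "g = (INF \<delta>\<in>{0<..}. s \<delta>)" unfolding g_def s_def ..
  have bddb: "bdd_below (s ` {0<..})" using s0 by (auto simp: bdd_below_def)
  have gs: "g \<le> s \<delta>" if "\<delta> > 0" for \<delta>
    unfolding gdef by (rule cINF_lower[OF bddb]) (use that in simp)
  have small: "\<exists>\<delta>>0. s \<delta> < g + \<epsilon>" if "\<epsilon> > 0" for \<epsilon>
  proof (rule ccontr)
    assume "\<not> ?thesis"
    hence "\<forall>\<delta>\<in>{0<..}. g + \<epsilon> \<le> s \<delta>" by auto
    hence "g + \<epsilon> \<le> g" unfolding gdef
      by (intro cINF_greatest) auto
    then show False using that by simp
  qed
  show "\<exists>\<delta>>0. \<forall>x. P \<delta> x \<longrightarrow> h x < g + \<epsilon>" if "\<epsilon> > 0" for \<epsilon>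
    using small[OF that] hs by (meson le_less_trans)
  show "\<exists>x. P \<delta> x \<and> \<bar>h x - g\<bar> < \<epsilon>" if dpos: "\<delta> > 0" and epos: "\<epsilon> > 0" for \<delta> \<epsilon>
  proof -
    obtain \<delta>' where d': "\<delta>' > 0" "s \<delta>' < g + \<epsilon>" using small[OF epos] by blast
    define d where "d = min \<delta> \<delta>'"
    have d: "d > 0" "d \<le> \<delta>" "d \<le> \<delta>'" using d' dpos by (auto simp: d_def)
    have "s d \<le> s \<delta>'" by (rule smono) (use d in auto)
    have "s d - \<epsilon> < s d" using epos by simp
    then obtain x where x: "P d x" "s d - \<epsilon> < h x"
      unfolding s_def using ex[OF d(1)] by (subst (asm) less_cSUP_iff[OF _ bdd]) auto
    have "g \<le> s d" using gs d by simp
    moreover have "h x \<le> s d" using hs x by simp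
    ultimately have "\<bar>h x - g\<bar> < \<epsilon>" using x \<open>s d \<le> s \<delta>'\<close> d' by linarith
    then show ?thesis using mono[OF d(2) x(1)] by blast
  qed
qed

lemma gsets:
  fixes P :: "real \<Rightarrow> 'x \<Rightarrow> bool" and h :: "'x \<Rightarrow> real" and W :: "real \<Rightarrow> 'v::real_normed_algebra_1 set"
  assumes ex: "\<And>\<delta>. \<delta> > 0 \<Longrightarrow> \<exists>x. P \<delta> x"
    and mono: "\<And>\<delta> \<delta>' x. \<delta> \<le> \<delta>' \<Longrightarrow> P \<delta> x \<Longrightarrow> P \<delta>' x"
    and h0: "\<And>x. 0 \<le> h x" and hB: "\<And>\<delta> x. P \<delta> x \<Longrightarrow> h x \<le> B"
    and W1: "\<And>\<delta> w. \<delta> > 0 \<Longrightarrow> w \<in> W \<delta> \<Longrightarrow> \<exists>x. P \<delta> x \<and> norm w \<le> h x"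
    and W2: "\<And>\<delta> x. \<delta> > 0 \<Longrightarrow> P \<delta> x \<Longrightarrow> of_real (h x) \<in> W \<delta>"
  defines "g \<equiv> (INF \<delta>\<in>{0<..}. SUP x\<in>{x. P \<delta> x}. h x)"
  shows "of_real g \<in> (\<Inter>\<delta>\<in>{0<..}. closure (W \<delta>))"
    and "\<And>a. a \<in> (\<Inter>\<delta>\<in>{0<..}. closure (W \<delta>)) \<Longrightarrow> norm a \<le> g"
proof -
  have A: "\<exists>x. P \<delta> x \<and> \<bar>h x - g\<bar> < \<epsilon>" if "\<delta> > 0" "\<epsilon> > 0" for \<delta> \<epsilon>
    unfolding g_def by (rule gcore_approx[where P=P and h=h and B=B]) (rule ex, assumption, rule mono, assumption+, rule h0, rule hB, assumption, rule that(1), rule that(2))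
  have U: "\<exists>\<delta>>0. \<forall>x. P \<delta> x \<longrightarrow> h x < g + \<epsilon>" if "\<epsilon> > 0" for \<epsilon>
    unfolding g_def by (rule gcore_upper[where P=P and h=h and B=B]) (rule ex, assumption, rule mono, assumption+, rule h0, rule hB, assumption, rule that(1))
  show "of_real g \<in> (\<Inter>\<delta>\<in>{0<..}. closure (W \<delta>))"
  proof (clarsimp simp: closure_approachable)
    fix \<delta> e :: real assume "0 < \<delta>" "0 < e"
    then obtain x where x: "P \<delta> x" "\<bar>h x - g\<bar> < e" using A by blast
    have "dist (of_real (h x) :: 'v) (of_real g) = dist (h x) g" by (metis dist_norm norm_of_real of_real_diff real_norm_def)
    hence "dist (of_real (h x) :: 'v) (of_real g) < e" using x by (simp add: dist_real_def)
    then show "\<exists>y\<in>W \<delta>. dist y (of_real g) < e"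
      using W2[OF \<open>0 < \<delta>\<close> x(1)] by blast
  qed
  show "norm a \<le> g" if a: "a \<in> (\<Inter>\<delta>\<in>{0<..}. closure (W \<delta>))" for a
  proof (rule ccontr)
    assume "\<not> norm a \<le> g"
    define \<epsilon> where "\<epsilon> = (norm a - g) / 2"
    have "\<epsilon> > 0" using \<open>\<not> norm a \<le> g\<close> by (simp add: \<epsilon>_def)
    then obtain \<delta> where d: "\<delta> > 0" "\<forall>x. P \<delta> x \<longrightarrow> h x < g + \<epsilon>" using U by blast
    have "W \<delta> \<subseteq> cball 0 (g + \<epsilon>)"
    proof
      fix w assume "w \<in> W \<delta>"
      then obtain x where "P \<delta> x" "norm w \<le> h x" using W1[OF d(1)] by blast
      then show "w \<in> cball 0 (g + \<epsilon>)" using d by (force simp: dist_norm)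
    qed
    hence "closure (W \<delta>) \<subseteq> cball 0 (g + \<epsilon>)" by (simp add: closure_minimal)
    hence "norm a \<le> g + \<epsilon>" using a d(1) by (force simp: dist_norm)
    hence "norm a \<le> g" unfolding \<epsilon>_def by (simp add: field_simps)
    then show False using \<open>\<not> norm a \<le> g\<close> by simp
  qed
qed



lemma sphere_exists:
  fixes G :: "'a::real_normed_vector \<Rightarrow>\<^sub>L 'b::real_normed_vector"
  assumes nG: "norm G = 1" and d: "\<delta> > 0"
  shows "\<exists>x. x \<in> sphere 0 1 \<and> 1 - \<delta> < norm (blinfun_apply G x)"
proof (rule ccontr)
  assume "\<not> ?thesis"
  hence H: "\<And>x. x \<in> sphere 0 1 \<Longrightarrow> norm (blinfun_apply G x) \<le> 1 - \<delta>" by (meson not_less)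
  have B: "norm (blinfun_apply G x) \<le> max 0 (1 - \<delta>) * norm x" for x
  proof (cases "x = 0")
    case True then show ?thesis by simp
  next
    case False
    define u where "u = inverse (norm x) *\<^sub>R x"
    have "u \<in> sphere 0 1" using False by (simp add: u_def)
    hence "norm (blinfun_apply G u) \<le> 1 - \<delta>" using H by blast
    moreover have "norm (blinfun_apply G u) = norm (blinfun_apply G x) / norm x"
      by (simp add: u_def blinfun.scaleR_right divide_inverse_commute)
    ultimately have "norm (blinfun_apply G x) \<le> (1 - \<delta>) * norm x"
      using False by (simp add: divide_le_eq)
    also have "\<dots> \<le> max 0 (1 - \<delta>) * norm x" by (simp add: mult_right_mono)
    finally show ?thesis .
  qed
  have "norm G \<le> max 0 (1 - \<delta>)" by (rule norm_blinfun_bound) (use B in auto)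
  then show False using nG d by simp
qed

lemma nontriv:
  fixes G :: "'a::real_normed_vector \<Rightarrow>\<^sub>L 'b::real_normed_vector"
  assumes nG: "norm G = 1"
  shows "\<exists>w::'b. w \<noteq> 0"
proof -
  obtain x where "x \<in> sphere 0 1" "1 - 1/2 < norm (blinfun_apply G x)"
    using sphere_exists[OF nG, of "1/2"] by auto
  then show ?thesis by (intro exI[of _ "blinfun_apply G x"]) auto
qed

lemma Tbound:
  fixes T :: "'a::real_normed_vector \<Rightarrow>\<^sub>L 'b::real_normed_vector"
  shows "x \<in> sphere 0 1 \<Longrightarrow> norm (blinfun_apply T x) \<le> norm T"
  using norm_blinfun[of T x] by simp

lemma gnorm_eq:
  "gnorm (blinfun_apply G) (blinfun_apply T) = (INF \<delta>\<in>{0<..}. SUP x\<in>{x. x \<in> sphere 0 1 \<and> 1 - \<delta> < norm (blinfun_apply G x)}. norm (blinfun_apply T x))"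
  unfolding gnorm_def by simp

lemma tilde_max:
  fixes G T :: "'a::real_normed_vector \<Rightarrow>\<^sub>L 'b::real_normed_vector"
  assumes nG: "norm G = 1"
  shows "is_max (SG_tilde (blinfun_apply G) (blinfun_apply T)) (gnorm (blinfun_apply G) (blinfun_apply T))"
proof -
  define W where "W \<delta> = {norm (blinfun_apply T x) | x. x \<in> sphere 0 1 \<and> norm (blinfun_apply G x) > 1 - \<delta>}" for \<delta>
  have SG: "SG_tilde (blinfun_apply G) (blinfun_apply T) = (\<Inter>\<delta>\<in>{0<..}. closure (W \<delta>))"
    unfolding SG_tilde_def W_def ..
  note GS = gsets[where P="\<lambda>\<delta> x. x \<in> sphere 0 1 \<and> 1 - \<delta> < norm (blinfun_apply G x)"
      and h="\<lambda>x. norm (blinfun_apply T x)" and B="norm T" and W=W]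
  have prem: "\<And>\<delta>. \<delta> > 0 \<Longrightarrow> \<exists>x. x \<in> sphere 0 1 \<and> 1 - \<delta> < norm (blinfun_apply G x)"
    "\<And>\<delta> \<delta>' x. \<delta> \<le> \<delta>' \<Longrightarrow> x \<in> sphere 0 1 \<and> 1 - \<delta> < norm (blinfun_apply G x) \<Longrightarrow> x \<in> sphere 0 1 \<and> 1 - \<delta>' < norm (blinfun_apply G x)"
    "\<And>x. 0 \<le> norm (blinfun_apply T x)"
    "\<And>\<delta> x. x \<in> sphere 0 1 \<and> 1 - \<delta> < norm (blinfun_apply G x) \<Longrightarrow> norm (blinfun_apply T x) \<le> norm T"
    "\<And>\<delta> w. \<delta> > 0 \<Longrightarrow> w \<in> W \<delta> \<Longrightarrow> \<exists>x. (x \<in> sphere 0 1 \<and> 1 - \<delta> < norm (blinfun_apply G x)) \<and> norm w \<le> norm (blinfun_apply T x)"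
    "\<And>\<delta> x. \<delta> > 0 \<Longrightarrow> x \<in> sphere 0 1 \<and> 1 - \<delta> < norm (blinfun_apply G x) \<Longrightarrow> of_real (norm (blinfun_apply T x)) \<in> W \<delta>"
    using sphere_exists[OF nG] Tbound[of _ T] by (auto simp: W_def)
  have A: "of_real (gnorm (blinfun_apply G) (blinfun_apply T)) \<in> (\<Inter>\<delta>\<in>{0<..}. closure (W \<delta>))"
    unfolding gnorm_eq by (rule GS(1)) (rule prem; assumption)+
  have B: "norm a \<le> gnorm (blinfun_apply G) (blinfun_apply T)" if "a \<in> (\<Inter>\<delta>\<in>{0<..}. closure (W \<delta>))" for a :: real
    unfolding gnorm_eq by (rule GS(2)) ((rule prem; assumption)+, rule that)
  show ?thesis unfolding is_max_def SG using A B by force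
qed

lemma real_max:
  fixes G T :: "'a::real_normed_vector \<Rightarrow>\<^sub>L 'b::real_normed_vector"
  assumes nG: "norm G = 1"
  shows "is_max (abs ` SG_real (blinfun_apply G) (blinfun_apply T)) (gnorm (blinfun_apply G) (blinfun_apply T))"
proof -
  define W where "W \<delta> = {blinfun_apply f (blinfun_apply T x) | x f. x \<in> sphere 0 1 \<and> (f :: 'b \<Rightarrow>\<^sub>L real) \<in> sphere 0 1
        \<and> norm (blinfun_apply G x) > 1 - \<delta>}" for \<delta>
  have SG: "SG_real (blinfun_apply G) (blinfun_apply T) = (\<Inter>\<delta>\<in>{0<..}. closure (W \<delta>))"
    unfolding SG_real_def W_def ..
  note GS = gsets[where P="\<lambda>\<delta> x. x \<in> sphere 0 1 \<and> 1 - \<delta> < norm (blinfun_apply G x)"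
      and h="\<lambda>x. norm (blinfun_apply T x)" and B="norm T" and W=W]
  have W1: "\<exists>x. (x \<in> sphere 0 1 \<and> 1 - \<delta> < norm (blinfun_apply G x)) \<and> norm w \<le> norm (blinfun_apply T x)"
    if dpos: "\<delta> > 0" and wW: "w \<in> W \<delta>" for \<delta> w
  proof -
    obtain x f where xf: "w = blinfun_apply f (blinfun_apply T x)" "x \<in> sphere 0 1" "(f :: 'b \<Rightarrow>\<^sub>L real) \<in> sphere 0 1"
      "norm (blinfun_apply G x) > 1 - \<delta>" using wW unfolding W_def by blast
    have "norm w \<le> norm f * norm (blinfun_apply T x)" using xf(1) norm_blinfun by blast
    also have "norm f = 1" using xf(3) by simp
    finally show ?thesis using xf by auto
  qed
  have W2: "of_real (norm (blinfun_apply T x)) \<in> W \<delta>"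
    if "\<delta> > 0" "x \<in> sphere 0 1 \<and> 1 - \<delta> < norm (blinfun_apply G x)" for \<delta> x
  proof -
    obtain f :: "'b \<Rightarrow>\<^sub>L real" where f: "norm f = 1" "blinfun_apply f (blinfun_apply T x) = norm (blinfun_apply T x)"
      using real_norming[OF nontriv[OF nG], of "blinfun_apply T x"] by blast
    have "f \<in> sphere 0 1" using f(1) by simp
    then show ?thesis unfolding W_def using that f(2) by force
  qed
  have prem: "\<And>\<delta>. \<delta> > 0 \<Longrightarrow> \<exists>x. x \<in> sphere 0 1 \<and> 1 - \<delta> < norm (blinfun_apply G x)"
    "\<And>\<delta> \<delta>' x. \<delta> \<le> \<delta>' \<Longrightarrow> x \<in> sphere 0 1 \<and> 1 - \<delta> < norm (blinfun_apply G x) \<Longrightarrow> x \<in> sphere 0 1 \<and> 1 - \<delta>' < norm (blinfun_apply G x)"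
    "\<And>x. 0 \<le> norm (blinfun_apply T x)"
    "\<And>\<delta> x. x \<in> sphere 0 1 \<and> 1 - \<delta> < norm (blinfun_apply G x) \<Longrightarrow> norm (blinfun_apply T x) \<le> norm T"
    using sphere_exists[OF nG] Tbound[of _ T] by auto
  have A: "of_real (gnorm (blinfun_apply G) (blinfun_apply T)) \<in> (\<Inter>\<delta>\<in>{0<..}. closure (W \<delta>))"
    unfolding gnorm_eq by (rule GS(1)) (rule prem W1 W2; assumption)+
  have B: "norm a \<le> gnorm (blinfun_apply G) (blinfun_apply T)" if "a \<in> (\<Inter>\<delta>\<in>{0<..}. closure (W \<delta>))" for a :: real
    unfolding gnorm_eq by (rule GS(2)) ((rule prem W1 W2; assumption)+, rule that)
  define g where "g = gnorm (blinfun_apply G) (blinfun_apply T)"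
  have A': "g \<in> SG_real (blinfun_apply G) (blinfun_apply T)" using A unfolding SG g_def by simp
  have B': "\<bar>a\<bar> \<le> g" if "a \<in> SG_real (blinfun_apply G) (blinfun_apply T)" for a
    using B[of a] that unfolding SG g_def by simp
  have "\<bar>g\<bar> = g" using B'[OF A'] by simp
  then have "g \<in> abs ` SG_real (blinfun_apply G) (blinfun_apply T)" using A' by (metis image_eqI)
  then show ?thesis unfolding is_max_def g_def[symmetric] using B' by blast
qed

lemma complex_max:
  fixes G T :: "'a::complex_banach \<Rightarrow>\<^sub>L 'b::complex_banach"
  assumes nG: "norm G = 1"
  shows "is_max (cmod ` SG_complex (blinfun_apply G) (blinfun_apply T)) (gnorm (blinfun_apply G) (blinfun_apply T))"
proof -
  define W where "W \<delta> = {f (blinfun_apply T x) | x f. x \<in> sphere 0 1 \<and> cdual f \<and> onorm f = 1 \<and> norm (blinfun_apply G x) > 1 - \<delta>}" for \<delta>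
  have SG: "SG_complex (blinfun_apply G) (blinfun_apply T) = (\<Inter>\<delta>\<in>{0<..}. closure (W \<delta>))"
    unfolding SG_complex_def W_def ..
  note GS = gsets[where P="\<lambda>\<delta> x. x \<in> sphere 0 1 \<and> 1 - \<delta> < norm (blinfun_apply G x)"
      and h="\<lambda>x. norm (blinfun_apply T x)" and B="norm T" and W=W]
  have W1: "\<exists>x. (x \<in> sphere 0 1 \<and> 1 - \<delta> < norm (blinfun_apply G x)) \<and> norm w \<le> norm (blinfun_apply T x)"
    if dpos: "\<delta> > 0" and wW: "w \<in> W \<delta>" for \<delta> w
  proof -
    obtain x f where xf: "w = f (blinfun_apply T x)" "x \<in> sphere 0 1" "cdual f" "onorm f = 1"
      "norm (blinfun_apply G x) > 1 - \<delta>" using wW unfolding W_def by blast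
    have "bounded_linear f" using xf(3) by (simp add: cdual_def)
    then have "norm w \<le> onorm f * norm (blinfun_apply T x)" using xf(1) onorm by blast
    then show ?thesis using xf by auto
  qed
  have W2: "of_real (norm (blinfun_apply T x)) \<in> W \<delta>"
    if "\<delta> > 0" "x \<in> sphere 0 1 \<and> 1 - \<delta> < norm (blinfun_apply G x)" for \<delta> x
  proof -
    obtain f where f: "cdual f" "onorm f = 1" "f (blinfun_apply T x) = complex_of_real (norm (blinfun_apply T x))"
      using complex_norming[OF nontriv[OF nG], of "blinfun_apply T x"] by blast
    show ?thesis unfolding W_def
      by (rule CollectI, rule exI[of _ x], rule exI[of _ f]) (use that f in simp)
  qed
  have prem: "\<And>\<delta>. \<delta> > 0 \<Longrightarrow> \<exists>x. x \<in> sphere 0 1 \<and> 1 - \<delta> < norm (blinfun_apply G x)"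
    "\<And>\<delta> \<delta>' x. \<delta> \<le> \<delta>' \<Longrightarrow> x \<in> sphere 0 1 \<and> 1 - \<delta> < norm (blinfun_apply G x) \<Longrightarrow> x \<in> sphere 0 1 \<and> 1 - \<delta>' < norm (blinfun_apply G x)"
    "\<And>x. 0 \<le> norm (blinfun_apply T x)"
    "\<And>\<delta> x. x \<in> sphere 0 1 \<and> 1 - \<delta> < norm (blinfun_apply G x) \<Longrightarrow> norm (blinfun_apply T x) \<le> norm T"
    using sphere_exists[OF nG] Tbound[of _ T] by auto
  have A: "of_real (gnorm (blinfun_apply G) (blinfun_apply T)) \<in> (\<Inter>\<delta>\<in>{0<..}. closure (W \<delta>))"
    unfolding gnorm_eq by (rule GS(1)) (rule prem W1 W2; assumption)+
  have B: "norm a \<le> gnorm (blinfun_apply G) (blinfun_apply T)" if "a \<in> (\<Inter>\<delta>\<in>{0<..}. closure (W \<delta>))" for a :: complex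
    unfolding gnorm_eq by (rule GS(2)) ((rule prem W1 W2; assumption)+, rule that)
  define g where "g = gnorm (blinfun_apply G) (blinfun_apply T)"
  have A': "complex_of_real g \<in> SG_complex (blinfun_apply G) (blinfun_apply T)" using A unfolding SG g_def by simp
  have B': "cmod a \<le> g" if "a \<in> SG_complex (blinfun_apply G) (blinfun_apply T)" for a
    using B[of a] that unfolding SG g_def by simp
  have "cmod (complex_of_real g) = g" using B'[OF A'] by simp
  then have "g \<in> cmod ` SG_complex (blinfun_apply G) (blinfun_apply T)" using A' by (metis image_eqI)
  then show ?thesis unfolding is_max_def g_def[symmetric] using B' by blast
qed

theorem proposition2p1:
  shows "(\<forall>(G :: 'a::banach \<Rightarrow>\<^sub>L 'b::banach) (T :: 'a \<Rightarrow>\<^sub>L 'b). norm G = 1 \<longrightarrow>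
            is_max (abs ` SG_real (blinfun_apply G) (blinfun_apply T)) (gnorm (blinfun_apply G) (blinfun_apply T))
          \<and> is_max (SG_tilde (blinfun_apply G) (blinfun_apply T)) (gnorm (blinfun_apply G) (blinfun_apply T)))
       \<and> (\<forall>(G :: 'c::complex_banach \<Rightarrow>\<^sub>L 'd::complex_banach) (T :: 'c \<Rightarrow>\<^sub>L 'd).
            norm G = 1 \<and> clinear_op (blinfun_apply G) \<and> clinear_op (blinfun_apply T) \<longrightarrow>
            is_max (cmod ` SG_complex (blinfun_apply G) (blinfun_apply T)) (gnorm (blinfun_apply G) (blinfun_apply T))
          \<and> is_max (SG_tilde (blinfun_apply G) (blinfun_apply T)) (gnorm (blinfun_apply G) (blinfun_apply T)))"
  by (intro conjI allI impI; (rule real_max tilde_max complex_max; simp))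

end
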